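(* Let $G$ be a graph with minimum degree $\delta(G)\ge 2$. Then (1) $G$ has a $\gamma$-set $D$ such that every vertex in $D$ has at least two neighbors in $V_G-D$; and (2) $\gamma(G)=\gamma_{\rm cer}(G)$.
   Context: All graphs are finite and simple; $\delta(G)$ denotes the minimum degree of $G$. A set $D\subseteq V_G$ is a dominating set of $G$ if every vertex of $V_G-D$ has a neighbor in $D$; $\gamma(G)$ is the minimum cardinality of a dominating set, and a $\gamma$-set is a dominating set of cardinality $\gamma(G)$. A set $D\subseteq V_G$ is a certified dominating set of $G$ if $D$ is a dominating set of $G$ and every vertex of $D$ has either zero or at least two neighbors in $V_G-D$; $\gamma_{\rm cer}(G)$ is the minimum cardinality of a certified dominating set of $G$. *)

theory Defs
  imports Main
begin

definition graph :: "'a set \<Rightarrow> ('a \<Rightarrow> 'a \<Rightarrow> bool) \<Rightarrow> bool" where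
  "graph V E \<longleftrightarrow> finite V \<and> (\<forall>u v. E u v \<longrightarrow> u \<in> V \<and> v \<in> V)
     \<and> (\<forall>u v. E u v \<longrightarrow> E v u) \<and> (\<forall>v. \<not> E v v)"

definition neighbors :: "'a set \<Rightarrow> ('a \<Rightarrow> 'a \<Rightarrow> bool) \<Rightarrow> 'a \<Rightarrow> 'a set" where
  "neighbors V E v = {u \<in> V. E v u}"

definition degree :: "'a set \<Rightarrow> ('a \<Rightarrow> 'a \<Rightarrow> bool) \<Rightarrow> 'a \<Rightarrow> nat" where
  "degree V E v = card (neighbors V E v)"

definition min_degree :: "'a set \<Rightarrow> ('a \<Rightarrow> 'a \<Rightarrow> bool) \<Rightarrow> nat" where
  "min_degree V E = Min (degree V E ` V)"

definition dominating_set :: "'a set \<Rightarrow> ('a \<Rightarrow> 'a \<Rightarrow> bool) \<Rightarrow> 'a set \<Rightarrow> bool" where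
  "dominating_set V E D \<longleftrightarrow> D \<subseteq> V \<and> (\<forall>v \<in> V - D. \<exists>u \<in> D. E v u)"

definition domination_number :: "'a set \<Rightarrow> ('a \<Rightarrow> 'a \<Rightarrow> bool) \<Rightarrow> nat" where
  "domination_number V E = Min (card ` {D. dominating_set V E D})"

definition gamma_set :: "'a set \<Rightarrow> ('a \<Rightarrow> 'a \<Rightarrow> bool) \<Rightarrow> 'a set \<Rightarrow> bool" where
  "gamma_set V E D \<longleftrightarrow> dominating_set V E D \<and> card D = domination_number V E"

definition certified_dominating_set :: "'a set \<Rightarrow> ('a \<Rightarrow> 'a \<Rightarrow> bool) \<Rightarrow> 'a set \<Rightarrow> bool" where
  "certified_dominating_set V E D \<longleftrightarrow> dominating_set V E D \<and>
     (\<forall>v \<in> D. card (neighbors V E v - D) = 0 \<or> card (neighbors V E v - D) \<ge> 2)"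

definition certified_domination_number :: "'a set \<Rightarrow> ('a \<Rightarrow> 'a \<Rightarrow> bool) \<Rightarrow> nat" where
  "certified_domination_number V E = Min (card ` {D. certified_dominating_set V E D})"

end

theory Submission
  imports Defs
begin

lemma dom_fin:
  assumes "graph V E"
  shows "finite (card ` {D. dominating_set V E D})" "card ` {D. dominating_set V E D} \<noteq> {}"
proof -
  have "{D. dominating_set V E D} \<subseteq> Pow V" by (auto simp: dominating_set_def)
  moreover have "finite V" using assms by (simp add: graph_def)
  ultimately show "finite (card ` {D. dominating_set V E D})" by (meson finite_Pow_iff finite_imageI finite_subset)
  have "dominating_set V E V" by (simp add: dominating_set_def)
  then show "card ` {D. dominating_set V E D} \<noteq> {}" by auto
qed

lemma dom_le:
  assumes "graph V E" "dominating_set V E D"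
  shows "domination_number V E \<le> card D"
  unfolding domination_number_def using dom_fin[OF assms(1)] assms(2) by (auto intro: Min_le)

lemma gamma_ex:
  assumes "graph V E"
  shows "\<exists>D. gamma_set V E D"
proof -
  have "domination_number V E \<in> card ` {D. dominating_set V E D}"
    unfolding domination_number_def using dom_fin[OF assms] by (rule Min_in)
  then show ?thesis unfolding gamma_set_def by auto
qed

definition cutset :: "'a set \<Rightarrow> ('a \<Rightarrow> 'a \<Rightarrow> bool) \<Rightarrow> 'a set \<Rightarrow> ('a \<times> 'a) set" where
  "cutset V E D = {(x,y). E x y \<and> (x \<in> D \<longleftrightarrow> y \<notin> D)}"

lemma cut_sub: "graph V E \<Longrightarrow> cutset V E D \<subseteq> V \<times> V"
  by (auto simp: cutset_def graph_def)

lemma part1: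
  fixes V :: "'a set" and E :: "'a \<Rightarrow> 'a \<Rightarrow> bool"
  assumes g: "graph V E" and md: "min_degree V E \<ge> 2"
  shows "\<exists>D. gamma_set V E D \<and> (\<forall>v \<in> D. card (neighbors V E v - D) \<ge> 2)"
proof -
  have finV: "finite V" using g by (simp add: graph_def)
  have sym: "\<And>u v. E u v \<Longrightarrow> E v u" and inV: "\<And>u v. E u v \<Longrightarrow> u \<in> V \<and> v \<in> V"
    and irr: "\<And>v. \<not> E v v" using g by (auto simp: graph_def)
  have deg: "card (neighbors V E v) \<ge> 2" if "v \<in> V" for v
  proof -
    have "min_degree V E \<le> degree V E v" unfolding min_degree_def using finV that by auto
    then show ?thesis using md by (simp add: degree_def)
  qed
  obtain D0 where "gamma_set V E D0" using gamma_ex[OF g] by auto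
  have bnd: "\<forall>D. gamma_set V E D \<longrightarrow> card (cutset V E D) < card (V \<times> V) + 1"
    using cut_sub[OF g] finV by (metis card_mono finite_SigmaI less_Suc_eq_le Suc_eq_plus1)
  obtain D where gD: "gamma_set V E D" and mx: "\<And>D'. gamma_set V E D' \<Longrightarrow> card (cutset V E D') \<le> card (cutset V E D)"
    using ex_has_greatest_nat[of "gamma_set V E" D0 "\<lambda>D. card (cutset V E D)", OF \<open>gamma_set V E D0\<close> bnd] by blast
  have domD: "dominating_set V E D" and cD: "card D = domination_number V E" using gD by (auto simp: gamma_set_def)
  have DV: "D \<subseteq> V" using domD by (simp add: dominating_set_def)
  have finD: "finite D" using DV finV finite_subset by blast
  have nodrop: False if "v \<in> D" "dominating_set V E (D - {v})" for v
  proof -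
    have "domination_number V E \<le> card (D - {v})" by (rule dom_le[OF g that(2)])
    moreover have "card (D - {v}) < card D" using finD that(1) by (meson card_Diff1_less)
    ultimately show False using cD by simp
  qed
  have "card (neighbors V E v - D) \<ge> 2" if vD: "v \<in> D" for v
  proof (rule ccontr)
    assume "\<not> ?thesis"
    then have c: "card (neighbors V E v - D) \<le> 1" by simp
    have vV: "v \<in> V" using vD DV by auto
    have finN: "finite (neighbors V E v)" using finV by (simp add: neighbors_def)
    have "card (neighbors V E v \<inter> D) \<ge> 1"
    proof -
      have "card (neighbors V E v) = card (neighbors V E v - D) + card (neighbors V E v \<inter> D)"
        using finN by (metis Int_commute Un_Diff_Int card_Un_disjoint finite_Diff finite_Int Int_Diff_disjoint inf_commute)
      then show ?thesis using deg[OF vV] c by linarith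
    qed
    then obtain w where wN: "w \<in> neighbors V E v" and wD: "w \<in> D"
      by (metis card.empty disjoint_iff not_one_le_zero)
    have Evw: "E v w" using wN by (simp add: neighbors_def)
    have wv: "w \<noteq> v" using Evw irr by auto
    show False
    proof (cases "neighbors V E v - D = {}")
      case True
      have "dominating_set V E (D - {v})"
        unfolding dominating_set_def
      proof (intro conjI ballI)
        show "D - {v} \<subseteq> V" using DV by auto
        fix x assume x: "x \<in> V - (D - {v})"
        show "\<exists>u\<in>D - {v}. E x u"
        proof (cases "x = v")
          case True then show ?thesis using wD wv Evw by auto
        next
          case False
          then have "x \<in> V - D" using x by auto
          then obtain u where u: "u \<in> D" "E x u" using domD by (auto simp: dominating_set_def)
          have "u \<noteq> v" using True u \<open>x \<in> V - D\<close> sym by (auto simp: neighbors_def)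
          then show ?thesis using u by auto
        qed
      qed
      then show False using nodrop vD by blast
    next
      case False
      then obtain u where uN: "u \<in> neighbors V E v - D" by auto
      have uniq: "\<And>y. y \<in> neighbors V E v - D \<Longrightarrow> y = u"
      proof -
        fix y assume "y \<in> neighbors V E v - D"
        moreover have "finite (neighbors V E v - D)" using finN by simp
        ultimately show "y = u" using c uN card_le_Suc0_iff_eq[of "neighbors V E v - D"] by auto
      qed
      have Evu: "E v u" and uV: "u \<in> V" and uD: "u \<notin> D" using uN by (auto simp: neighbors_def)
      show False
      proof (cases "\<exists>z \<in> D - {v}. E u z")
        case True
        have "dominating_set V E (D - {v})"
          unfolding dominating_set_def
        proof (intro conjI ballI)
          show "D - {v} \<subseteq> V" using DV by auto
          fix x assume x: "x \<in> V - (D - {v})"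
          show "\<exists>y\<in>D - {v}. E x y"
          proof (cases "x = v")
            case True then show ?thesis using wD wv Evw by auto
          next
            case False
            then have xo: "x \<in> V - D" using x by auto
            show ?thesis
            proof (cases "x = u")
              case True then show ?thesis using \<open>\<exists>z \<in> D - {v}. E u z\<close> by auto
            next
              case False
              obtain y where y: "y \<in> D" "E x y" using domD xo by (auto simp: dominating_set_def)
              have "y \<noteq> v"
              proof
                assume "y = v"
                then have "x \<in> neighbors V E v - D" using y xo sym by (auto simp: neighbors_def)
                then show False using uniq False by blast
              qed
              then show ?thesis using y by auto
            qed
          qed
        qed
        then show False using nodrop vD by blast
      next
        case nz: False
        define D' where "D' = insert u (D - {v})"
        have domD': "dominating_set V E D'"
          unfolding dominating_set_def
        proof (intro conjI ballI)
          show "D' \<subseteq> V" using DV uV by (auto simp: D'_def)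
          fix x assume x: "x \<in> V - D'"
          show "\<exists>y\<in>D'. E x y"
          proof (cases "x = v")
            case True then show ?thesis using wD wv Evw by (auto simp: D'_def)
          next
            case False
            then have xo: "x \<in> V - D" "x \<noteq> u" using x by (auto simp: D'_def)
            obtain y where y: "y \<in> D" "E x y" using domD xo by (auto simp: dominating_set_def)
            have "y \<noteq> v"
            proof
              assume "y = v"
              then have "x \<in> neighbors V E v - D" using y xo sym by (auto simp: neighbors_def)
              then show False using uniq xo by blast
            qed
            then show ?thesis using y by (auto simp: D'_def)
          qed
        qed
        have "card D' = card D" using finD uD vD by (simp add: D'_def card_insert_if) (metis Suc_pred card_gt_0_iff empty_iff)
        then have gD': "gamma_set V E D'" using domD' cD by (simp add: gamma_set_def)
        have sub: "cutset V E D \<subseteq> cutset V E D'"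
        proof
          fix p assume p: "p \<in> cutset V E D"
          obtain x y where pxy: "p = (x,y)" by force
          have Exy: "E x y" and iff: "x \<in> D \<longleftrightarrow> y \<notin> D" using p pxy by (auto simp: cutset_def)
          have key: "x \<in> D' \<longleftrightarrow> y \<notin> D'"
          proof -
            have A: "a \<in> D \<Longrightarrow> b \<notin> D \<Longrightarrow> E a b \<Longrightarrow> (a \<in> D' \<longleftrightarrow> b \<notin> D')" for a b
            proof -
              assume a: "a \<in> D" and b: "b \<notin> D" and ab: "E a b"
              show ?thesis
              proof (cases "a = v")
                case True
                then have "b \<in> neighbors V E v - D" using b ab inV by (auto simp: neighbors_def)
                then have "b = u" using uniq by blast
                then show ?thesis using True uD vD by (auto simp: D'_def)
              next
                case False
                have "b \<noteq> u" using nz a False ab sym by blast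
                then show ?thesis using a b False by (auto simp: D'_def)
              qed
            qed
            show ?thesis
            proof (cases "x \<in> D")
              case True then show ?thesis using A[of x y] iff Exy by auto
            next
              case False then show ?thesis using A[of y x] iff Exy sym by auto
            qed
          qed
          show "p \<in> cutset V E D'" using Exy key pxy by (simp add: cutset_def)
        qed
        have new: "(v,w) \<in> cutset V E D' - cutset V E D"
          using Evw vD wD wv uD by (auto simp: cutset_def D'_def)
        have "cutset V E D \<subset> cutset V E D'" using sub new by blast
        moreover have "finite (cutset V E D')" using cut_sub[OF g] finV finite_subset by blast
        ultimately have "card (cutset V E D) < card (cutset V E D')" by (rule psubset_card_mono[rotated])
        then show False using mx[OF gD'] by simp
      qed
    qed
  qed
  then show ?thesis using gD by blast
qed

theorem corollary2p3:
  fixes V :: "'a set" and E :: "'a \<Rightarrow> 'a \<Rightarrow> bool"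
  assumes "graph V E" and "V \<noteq> {}" and "min_degree V E \<ge> 2"
  shows "(\<exists>D. gamma_set V E D \<and> (\<forall>v \<in> D. card (neighbors V E v - D) \<ge> 2))
       \<and> domination_number V E = certified_domination_number V E"
proof -
  obtain D where gD: "gamma_set V E D" and two: "\<forall>v \<in> D. card (neighbors V E v - D) \<ge> 2"
    using part1[OF assms(1) assms(3)] by blast
  have cert: "certified_dominating_set V E D" using gD two
    by (auto simp: certified_dominating_set_def gamma_set_def)
  have sub: "{D. certified_dominating_set V E D} \<subseteq> {D. dominating_set V E D}"
    by (auto simp: certified_dominating_set_def)
  have fin: "finite (card ` {D. certified_dominating_set V E D})"
    using dom_fin(1)[OF assms(1)] sub by (meson finite_subset image_mono)
  have ne: "card ` {D. certified_dominating_set V E D} \<noteq> {}" using cert by auto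
  have le1: "certified_domination_number V E \<le> domination_number V E"
    unfolding certified_domination_number_def using gD cert fin
    by (metis Min_le gamma_set_def image_eqI mem_Collect_eq)
  have "certified_domination_number V E \<in> card ` {D. certified_dominating_set V E D}"
    unfolding certified_domination_number_def using fin ne by (rule Min_in)
  then obtain C where "certified_dominating_set V E C" "certified_domination_number V E = card C" by auto
  then have le2: "domination_number V E \<le> certified_domination_number V E"
    using dom_le[OF assms(1)] by (auto simp: certified_dominating_set_def)
  show ?thesis using gD two le1 le2 by auto
qed

end
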